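(* Let $m\in M^\oplus$, $P=P(m)$, $d\in N^\oplus$ and $\theta\in M_{\mathbb{R}}$. A $P$-framed representation $\nu:P\to E$ of $(Q,I)$ with $d(E)=d$, viewed as a representation of $(Q^\star,I^\star)$ of dimension vector $d^\star$ (with $\mathbb{C}$ at $\star$ and the arrows out of $\star$ given by $\nu$), is $(\theta-\epsilon\delta)^\star$-semistable for all sufficiently small $\epsilon>0$ (i.e. defines a point of $F(d,m,\theta)$) if and only if (a) $E\in\mathcal{F}(\theta)$ and (b) $\mathrm{coker}(\nu)\in\mathcal{T}(\theta)$.
   Context: $Q$ is a quiver with finite vertex set $V(Q)$, $I\subset\mathbb{C}Q$ a two-sided ideal spanned by combinations of paths of length $\ge2$, $\mathcal{A}=\mathrm{rep}(Q,I)$ the finite-dimensional $\mathbb{C}Q/I$-modules. $N=\mathbb{Z}^{V(Q)}$ with basis $(e_i)$, $N^\oplus$ non-negative vectors, $M=\mathrm{Hom}(N,\mathbb{Z})$, $M_{\mathbb{R}}=M\otimes\mathbb{R}$, $\delta\in M$ with $\delta(e_i)=1$, $M^\oplus=\{0\}\cup\{m:m(n)>0$ for all nonzero $n\in N^\oplus\}$. $\theta(E)=\theta(d(E))$ for dimension vectors $d(E)$. $\mathcal{T}(\theta)$ (resp. $\mathcal{F}(\theta)$) is the full subcategory of $E\in\mathcal{A}$ all of whose quotients $Q$ satisfy $\theta(Q)>0$ (resp. all of whose subobjects $A$ satisfy $\theta(A)\le0$). $P_i=(\mathbb{C}Q/I)\epsilon_i$ for the vertex idempotent $\epsilon_i$,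 $P(m)=\bigoplus_iP_i^{m(e_i)}$; a $P$-framed representation is $E\in\mathcal{A}$ with a module map $\nu:P\to E$, which is the same as choosing $m(e_i)$ vectors in $E_i$ for each $i$. $Q^\star$ adds a vertex $\star$ and $m(e_i)$ arrows $\star\to i$; $I^\star$ is generated by $I$. $d^\star=(d,1)\in N\oplus\mathbb{Z}$, and for $\eta\in M_{\mathbb{R}}$, $\eta^\star=(\eta,-\eta(d))$. A representation $E^\star$ of $(Q^\star,I^\star)$ is $\eta^\star$-semistable if $\eta^\star(E^\star)=0$ and every subrepresentation $A^\star$ has $\eta^\star(A^\star)\le0$. $F(d,m,\theta)$ denotes the moduli scheme $M^{ss}(d^\star,(\theta-\epsilon\delta)^\star)$ for $0<\epsilon\ll1$. *)

theory Defs
  imports Complex_Main "HOL-Library.Product_Plus"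
begin

text \<open>A path is a pair (i, as) of a start vertex i and a
 list of arrows as traversed from left to right.  Trivial paths are (i, []).\<close>

fun walk :: "('a \<Rightarrow> 'v) \<Rightarrow> ('a \<Rightarrow> 'v) \<Rightarrow> 'v \<Rightarrow> 'a list \<Rightarrow> bool" where
  "walk s t i [] = True"
| "walk s t i (a # as) = (s a = i \<and> walk s t (t a) as)"

definition endv :: "('a \<Rightarrow> 'v) \<Rightarrow> 'v \<Rightarrow> 'a list \<Rightarrow> 'v" where
  "endv t i as = (if as = [] then i else t (last as))"

text \<open>Elements of the path algebra CQ: finitely supported complex combinations of paths.\<close>
definition path_elt :: "('a \<Rightarrow> 'v) \<Rightarrow> ('a \<Rightarrow> 'v) \<Rightarrow> (('v \<times> 'a list) \<Rightarrow> complex) \<Rightarrow> bool" where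
  "path_elt s t r \<longleftrightarrow> finite {p. r p \<noteq> 0} \<and> (\<forall>p. r p \<noteq> 0 \<longrightarrow> walk s t (fst p) (snd p))"

definition pmul :: "('a \<Rightarrow> 'v) \<Rightarrow> ('v \<times> 'a list) \<Rightarrow> ('v \<times> 'a list) \<Rightarrow> ('v \<times> 'a list) option" where
  "pmul t p q = (if endv t (fst p) (snd p) = fst q then Some (fst p, snd p @ snd q) else None)"

definition pa_mult :: "('a \<Rightarrow> 'v) \<Rightarrow> (('v \<times> 'a list) \<Rightarrow> complex) \<Rightarrow> (('v \<times> 'a list) \<Rightarrow> complex)
    \<Rightarrow> (('v \<times> 'a list) \<Rightarrow> complex)" where
  "pa_mult t r u = (\<lambda>p. \<Sum>pq \<in> {pq. r (fst pq) \<noteq> 0 \<and> u (snd pq) \<noteq> 0 \<and> pmul t (fst pq) (snd pq) = Some p}.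
                          r (fst pq) * u (snd pq))"

definition admissible_ideal :: "('a \<Rightarrow> 'v) \<Rightarrow> ('a \<Rightarrow> 'v) \<Rightarrow> (('v \<times> 'a list) \<Rightarrow> complex) set \<Rightarrow> bool" where
  "admissible_ideal s t I \<longleftrightarrow>
     (\<lambda>_. 0) \<in> I \<and>
     (\<forall>r\<in>I. path_elt s t r \<and> (\<forall>p. r p \<noteq> 0 \<longrightarrow> 2 \<le> length (snd p))) \<and>
     (\<forall>r\<in>I. \<forall>u\<in>I. (\<lambda>p. r p + u p) \<in> I) \<and>
     (\<forall>r\<in>I. \<forall>c. (\<lambda>p. c * r p) \<in> I) \<and>
     (\<forall>r\<in>I. \<forall>u. path_elt s t u \<longrightarrow> pa_mult t r u \<in> I \<and> pa_mult t u r \<in> I)"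

text \<open>A representation lives in an ambient complex vector space 'e (scalar
 multiplication sc): a subspace E i at each vertex and maps \<rho> a, linear on
 E (src a), sending E (src a) into E (tgt a).\<close>

definition lin_on :: "(complex \<Rightarrow> 'e \<Rightarrow> 'e) \<Rightarrow> 'e set \<Rightarrow> ('e \<Rightarrow> 'e::ab_group_add) \<Rightarrow> bool" where
  "lin_on sc S f \<longleftrightarrow> (\<forall>x\<in>S. \<forall>y\<in>S. f (x + y) = f x + f y) \<and> (\<forall>c. \<forall>x\<in>S. f (sc c x) = sc c (f x))"

definition fin_dim_sub :: "(complex \<Rightarrow> 'e \<Rightarrow> 'e::ab_group_add) \<Rightarrow> 'e set \<Rightarrow> bool" where
  "fin_dim_sub sc S \<longleftrightarrow> module.subspace sc S \<and> (\<exists>B. finite B \<and> B \<subseteq> S \<and> module.span sc B = S)"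

definition is_rep :: "(complex \<Rightarrow> 'e \<Rightarrow> 'e::ab_group_add) \<Rightarrow> 'b set \<Rightarrow> ('b \<Rightarrow> 'w) \<Rightarrow> ('b \<Rightarrow> 'w)
    \<Rightarrow> ('w \<Rightarrow> 'e set) \<Rightarrow> ('b \<Rightarrow> 'e \<Rightarrow> 'e) \<Rightarrow> bool" where
  "is_rep sc Ar s t E \<rho> \<longleftrightarrow> (\<forall>i. fin_dim_sub sc (E i)) \<and>
     (\<forall>a\<in>Ar. lin_on sc (E (s a)) (\<rho> a) \<and> \<rho> a ` E (s a) \<subseteq> E (t a))"

text \<open>The representation is annihilated by the path algebra element r (it is a
 representation of (Q,I) iff annihilated by all r in I).  For x in E i, the
 component in E j of r.x is the sum over paths from i to j.\<close>
definition annihilates :: "(complex \<Rightarrow> 'e \<Rightarrow> 'e::ab_group_add) \<Rightarrow> ('a \<Rightarrow> 'v) \<Rightarrow> ('v \<Rightarrow> 'e set)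
    \<Rightarrow> ('a \<Rightarrow> 'e \<Rightarrow> 'e) \<Rightarrow> (('v \<times> 'a list) \<Rightarrow> complex) \<Rightarrow> bool" where
  "annihilates sc t E \<rho> r \<longleftrightarrow> (\<forall>i j. \<forall>x\<in>E i.
     (\<Sum>p \<in> {p. r p \<noteq> 0 \<and> fst p = i \<and> endv t i (snd p) = j}. sc (r p) (fold \<rho> (snd p) x)) = 0)"

definition dimvec :: "(complex \<Rightarrow> 'e \<Rightarrow> 'e::ab_group_add) \<Rightarrow> ('w \<Rightarrow> 'e set) \<Rightarrow> 'w \<Rightarrow> nat" where
  "dimvec sc E = (\<lambda>i. vector_space.dim sc (E i))"

definition wt :: "('w::finite \<Rightarrow> real) \<Rightarrow> ('w \<Rightarrow> nat) \<Rightarrow> real" where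
  "wt \<theta> n = (\<Sum>i\<in>UNIV. \<theta> i * real (n i))"

definition is_subrep :: "(complex \<Rightarrow> 'e \<Rightarrow> 'e::ab_group_add) \<Rightarrow> 'b set \<Rightarrow> ('b \<Rightarrow> 'w) \<Rightarrow> ('b \<Rightarrow> 'w)
    \<Rightarrow> ('w \<Rightarrow> 'e set) \<Rightarrow> ('b \<Rightarrow> 'e \<Rightarrow> 'e) \<Rightarrow> ('w \<Rightarrow> 'e set) \<Rightarrow> bool" where
  "is_subrep sc Ar s t E \<rho> A \<longleftrightarrow> (\<forall>i. module.subspace sc (A i) \<and> A i \<subseteq> E i) \<and>
     (\<forall>a\<in>Ar. \<rho> a ` A (s a) \<subseteq> A (t a))"

definition is_epi :: "(complex \<Rightarrow> 'e \<Rightarrow> 'e::ab_group_add) \<Rightarrow> 'b set \<Rightarrow> ('b \<Rightarrow> 'w) \<Rightarrow> ('b \<Rightarrow> 'w)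
    \<Rightarrow> ('w \<Rightarrow> 'e set) \<Rightarrow> ('b \<Rightarrow> 'e \<Rightarrow> 'e) \<Rightarrow> ('w \<Rightarrow> 'e set) \<Rightarrow> ('b \<Rightarrow> 'e \<Rightarrow> 'e)
    \<Rightarrow> ('w \<Rightarrow> 'e \<Rightarrow> 'e) \<Rightarrow> bool" where
  "is_epi sc Ar s t E \<rho> F \<sigma> f \<longleftrightarrow> is_rep sc Ar s t F \<sigma> \<and>
     (\<forall>i. lin_on sc (E i) (f i) \<and> f i ` E i = F i) \<and>
     (\<forall>a\<in>Ar. \<forall>x\<in>E (s a). f (t a) (\<rho> a x) = \<sigma> a (f (s a) x))"

definition semistable :: "(complex \<Rightarrow> 'e \<Rightarrow> 'e::ab_group_add) \<Rightarrow> 'b set \<Rightarrow> ('b \<Rightarrow> 'w::finite) \<Rightarrow> ('b \<Rightarrow> 'w)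
    \<Rightarrow> ('w \<Rightarrow> 'e set) \<Rightarrow> ('b \<Rightarrow> 'e \<Rightarrow> 'e) \<Rightarrow> ('w \<Rightarrow> real) \<Rightarrow> bool" where
  "semistable sc Ar s t E \<rho> \<eta> \<longleftrightarrow> wt \<eta> (dimvec sc E) = 0 \<and>
     (\<forall>A. is_subrep sc Ar s t E \<rho> A \<longrightarrow> wt \<eta> (dimvec sc A) \<le> 0)"

definition M_plus :: "('v::finite \<Rightarrow> int) \<Rightarrow> bool" where
  "M_plus m \<longleftrightarrow> m = (\<lambda>_. 0) \<or>
     (\<forall>n::'v \<Rightarrow> int. (\<forall>i. 0 \<le> n i) \<and> n \<noteq> (\<lambda>_. 0) \<longrightarrow> (\<Sum>i\<in>UNIV. m i * n i) > 0)"

definition in_Fcat :: "(complex \<Rightarrow> 'e \<Rightarrow> 'e::ab_group_add) \<Rightarrow> ('a \<Rightarrow> 'v::finite) \<Rightarrow> ('a \<Rightarrow> 'v)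
    \<Rightarrow> ('v \<Rightarrow> real) \<Rightarrow> ('v \<Rightarrow> 'e set) \<Rightarrow> ('a \<Rightarrow> 'e \<Rightarrow> 'e) \<Rightarrow> bool" where
  "in_Fcat sc s t \<theta> E \<rho> \<longleftrightarrow> (\<forall>A. is_subrep sc UNIV s t E \<rho> A \<longrightarrow> wt \<theta> (dimvec sc A) \<le> 0)"

text \<open>coker(nu) in T(theta): every nonzero quotient of coker(nu) has theta > 0.
 Quotients of coker(nu) = E / im(nu) are exactly the quotients f : E ->> F of E
 with f o nu = 0 (universal property of the cokernel); quotient objects are
 represented by surjective morphisms into representations in the same ambient
 space (every quotient is isomorphic to one of these).\<close>
definition coker_in_Tcat :: "(complex \<Rightarrow> 'e \<Rightarrow> 'e::ab_group_add) \<Rightarrow> ('a \<Rightarrow> 'v::finite) \<Rightarrow> ('a \<Rightarrow> 'v)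
    \<Rightarrow> ('v \<Rightarrow> real) \<Rightarrow> ('v \<Rightarrow> int) \<Rightarrow> ('v \<Rightarrow> 'e set) \<Rightarrow> ('a \<Rightarrow> 'e \<Rightarrow> 'e) \<Rightarrow> ('v \<Rightarrow> nat \<Rightarrow> 'e) \<Rightarrow> bool" where
  "coker_in_Tcat sc s t \<theta> m E \<rho> \<nu> \<longleftrightarrow>
     (\<forall>F \<sigma> f. is_epi sc UNIV s t E \<rho> F \<sigma> f \<and> (\<forall>i k. k < nat (m i) \<longrightarrow> f i (\<nu> i k) = 0)
        \<and> (\<exists>i. F i \<noteq> {0}) \<longrightarrow> wt \<theta> (dimvec sc F) > 0)"

text \<open>Vertices of Q*: Some i for i in Q, None for the framing vertex \<star>.
 Arrows: Inl a for a in Q, and Inr (i,k), k < m(e_i), from \<star> to i.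
 Ambient space of E*: 'e \<times> complex; E*_i = E_i \<times> 0, E*_\<star> = 0 \<times> C.\<close>

definition star_sc :: "(complex \<Rightarrow> 'e \<Rightarrow> 'e) \<Rightarrow> complex \<Rightarrow> 'e \<times> complex \<Rightarrow> 'e \<times> complex" where
  "star_sc sc c xz = (sc c (fst xz), c * snd xz)"

definition star_Ar :: "('v \<Rightarrow> int) \<Rightarrow> ('a + ('v \<times> nat)) set" where
  "star_Ar m = range Inl \<union> {Inr (i, k) | i k. k < nat (m i)}"

fun star_src :: "('a \<Rightarrow> 'v) \<Rightarrow> 'a + ('v \<times> nat) \<Rightarrow> 'v option" where
  "star_src s (Inl a) = Some (s a)"
| "star_src s (Inr ik) = None"

fun star_tgt :: "('a \<Rightarrow> 'v) \<Rightarrow> 'a + ('v \<times> nat) \<Rightarrow> 'v option" where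
  "star_tgt t (Inl a) = Some (t a)"
| "star_tgt t (Inr ik) = Some (fst ik)"

fun star_E :: "('v \<Rightarrow> 'e::zero set) \<Rightarrow> 'v option \<Rightarrow> ('e \<times> complex) set" where
  "star_E E (Some i) = E i \<times> {0}"
| "star_E E None = {0} \<times> UNIV"

fun star_rho :: "(complex \<Rightarrow> 'e \<Rightarrow> 'e) \<Rightarrow> ('a \<Rightarrow> 'e \<Rightarrow> 'e) \<Rightarrow> ('v \<Rightarrow> nat \<Rightarrow> 'e)
    \<Rightarrow> 'a + ('v \<times> nat) \<Rightarrow> 'e \<times> complex \<Rightarrow> 'e \<times> complex" where
  "star_rho sc \<rho> \<nu> (Inl a) xz = (\<rho> a (fst xz), 0)"
| "star_rho sc \<rho> \<nu> (Inr ik) xz = (sc (snd xz) (\<nu> (fst ik) (snd ik)), 0)"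

fun star_wt :: "('v::finite \<Rightarrow> real) \<Rightarrow> ('v \<Rightarrow> nat) \<Rightarrow> 'v option \<Rightarrow> real" where
  "star_wt \<eta> d (Some i) = \<eta> i"
| "star_wt \<eta> d None = - wt \<eta> d"

end

theory Submission
  imports Defs "HOL-Library.FuncSet"
begin


context vector_space begin

lemma fds_basis:
  assumes "subspace V" "finite B0" "span B0 = V"
  obtains B where "finite B" "B \<subseteq> V" "independent B" "span B = V" "card B = dim V"
proof -
  obtain B where B: "B \<subseteq> V" "independent B" "V \<subseteq> span B" "card B = dim V"
    using basis_exists by blast
  have "span B \<subseteq> V" using span_minimal[OF B(1) assms(1)] .
  moreover have "finite B"
    using independent_span_bound[OF assms(2) B(2)] B(1) assms(3) by auto
  ultimately show ?thesis using that B by auto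
qed

lemma fds_extend:
  assumes "subspace A" "A \<subseteq> V" "subspace V" "finite B0" "span B0 = V"
  obtains BA BC where "finite BA" "finite BC" "BA \<inter> BC = {}" "independent (BA \<union> BC)"
    "span BA = A" "span (BA \<union> BC) = V" "card BA = dim A" "card BC = dim V - dim A" "dim A \<le> dim V"
proof -
  obtain BA where BA: "BA \<subseteq> A" "independent BA" "A \<subseteq> span BA" "card BA = dim A"
    using basis_exists by blast
  have fBA: "finite BA"
    using independent_span_bound[OF assms(4) BA(2)] BA(1) assms(2,5) by auto
  obtain BE where BE: "BA \<subseteq> BE" "BE \<subseteq> V" "independent BE" "V \<subseteq> span BE"
    using maximal_independent_subset_extend[of BA V] BA(1,2) assms(2) by blast
  have fBE: "finite BE"
    using independent_span_bound[OF assms(4) BE(3)] BE(2) assms(5) by auto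
  have cBE: "card BE = dim V" using basis_card_eq_dim[OF BE(2) BE(4) BE(3)] .
  have sBA: "span BA = A" using span_minimal[OF BA(1) assms(1)] BA(3) by auto
  have sBE: "span BE = V" using span_minimal[OF BE(2) assms(3)] BE(4) by auto
  have u: "BA \<union> (BE - BA) = BE" using BE(1) by auto
  show ?thesis
  proof (rule that[of BA "BE - BA"])
    show "card (BE - BA) = dim V - dim A"
      using card_Diff_subset[OF fBA BE(1)] cBE BA(4) by simp
    show "dim A \<le> dim V" using card_mono[OF fBE BE(1)] cBE BA(4) by simp
  qed (use fBA fBE u BE sBA sBE BA in auto)
qed

lemma dim_mono_fds:
  assumes "subspace V" "finite B0" "span B0 = V" "S \<subseteq> V"
  shows "dim S \<le> dim V"
proof -
  obtain B where B: "finite B" "B \<subseteq> V" "independent B" "span B = V" "card B = dim V"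
    using fds_basis[OF assms(1-3)] by blast
  show ?thesis using dim_le_card[of S B] B assms(4) by auto
qed

lemma dim_0_fds:
  assumes "finite B0" "V \<subseteq> span B0"
  shows "dim V = 0 \<longleftrightarrow> V \<subseteq> {0}"
proof
  assume d: "dim V = 0"
  obtain B where B: "B \<subseteq> V" "independent B" "V \<subseteq> span B" "card B = dim V"
    using basis_exists by blast
  have "finite B" using independent_span_bound[OF assms(1) B(2)] B(1) assms(2) by auto
  then have "B = {}" using B(4) d by simp
  then show "V \<subseteq> {0}" using B(3) by simp
next
  assume "V \<subseteq> {0}"
  then show "dim V = 0" using dim_le_card[of V "{}"] by simp
qed

lemma span_disj_zero:
  assumes "independent (S \<union> T)" "S \<inter> T = {}" "x \<in> span S" "x \<in> span T"
  shows "x = 0"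
proof -
  have r1: "representation (S \<union> T) x = representation S x"
    by (rule representation_extend[OF assms(1) assms(3)]) auto
  have r2: "representation (S \<union> T) x = representation T x"
    by (rule representation_extend[OF assms(1) assms(4)]) auto
  have z: "representation (S \<union> T) x = (\<lambda>b. 0)"
  proof
    fix b show "representation (S \<union> T) x b = 0"
      using representation_ne_zero[of S x b] representation_ne_zero[of T x b] r1 r2 assms(2)
      by (metis disjoint_iff)
  qed
  have "x \<in> span (S \<union> T)" using assms(3) span_mono[of S "S \<union> T"] by auto
  from sum_nonzero_representation_eq[OF assms(1) this] z show ?thesis by simp
qed

end

locale cvs = vector_space scale for scale :: "complex \<Rightarrow> 'b::ab_group_add \<Rightarrow> 'b"
begin

lemma lin_on_0: "lin_on scale S f \<Longrightarrow> 0 \<in> S \<Longrightarrow> f 0 = 0"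
  unfolding lin_on_def by (metis add.right_neutral add_left_imp_eq)

lemma lin_on_diff:
  assumes "lin_on scale S f" "subspace S" "x \<in> S" "y \<in> S"
  shows "f (x - y) = f x - f y"
proof -
  have "f x = f ((x - y) + y)" by simp
  also have "\<dots> = f (x - y) + f y"
    using assms unfolding lin_on_def by (meson subspace_diff)
  finally show ?thesis by (simp add: algebra_simps)
qed

lemma lin_on_sum:
  assumes "lin_on scale E f" "subspace E" "finite S" "S \<subseteq> E"
  shows "f (\<Sum>b\<in>S. scale (u b) b) = (\<Sum>b\<in>S. scale (u b) (f b))"
  using assms(3,4)
proof (induction S rule: finite_induct)
  case empty
  then show ?case using lin_on_0[OF assms(1) subspace_0[OF assms(2)]] by simp
next
  case (insert x F)
  have inE: "(\<Sum>b\<in>F. scale (u b) b) \<in> E" using insert assms(2)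
    by (intro subspace_sum) (auto intro: subspace_scale)
  have xE: "scale (u x) x \<in> E" using insert assms(2) subspace_scale by auto
  have "f (\<Sum>b\<in>insert x F. scale (u b) b) = f (scale (u x) x + (\<Sum>b\<in>F. scale (u b) b))"
    using insert by simp
  also have "\<dots> = f (scale (u x) x) + f (\<Sum>b\<in>F. scale (u b) b)"
    using assms(1) inE xE unfolding lin_on_def by blast
  also have "\<dots> = scale (u x) (f x) + (\<Sum>b\<in>F. scale (u b) (f b))"
    using insert assms(1) unfolding lin_on_def by auto
  finally show ?case using insert by simp
qed


lemma rank_nullity:
  assumes "subspace V" "finite B0" "span B0 = V" "lin_on scale V f" "subspace W" "f ` V = W"
  shows "dim W = dim V - dim {x\<in>V. f x = 0}"
proof -
  let ?K = "{x\<in>V. f x = 0}"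
  have f0: "f 0 = 0" using lin_on_0[OF assms(4) subspace_0[OF assms(1)]] .
  have sK: "subspace ?K"
    unfolding subspace_def
  proof (intro conjI ballI allI)
    show "0 \<in> ?K" using f0 subspace_0[OF assms(1)] by simp
  next
    fix x y assume "x \<in> ?K" "y \<in> ?K"
    then show "x + y \<in> ?K" using assms(1,4) unfolding lin_on_def by (auto intro: subspace_add)
  next
    fix c x assume "x \<in> ?K"
    then show "scale c x \<in> ?K" using assms(1,4) unfolding lin_on_def by (auto intro: subspace_scale)
  qed
  have KV: "?K \<subseteq> V" by blast
  obtain BK BC where B: "finite BK" "finite BC" "BK \<inter> BC = {}" "independent (BK \<union> BC)"
    "span BK = ?K" "span (BK \<union> BC) = V" "card BK = dim ?K" "card BC = dim V - dim ?K" "dim ?K \<le> dim V"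
    by (rule fds_extend[OF sK KV assms(1-3)])
  have BCV: "span BC \<subseteq> V" using B(6) span_mono[of BC "BK \<union> BC"] by auto
  have BCV': "BC \<subseteq> V" using BCV span_superset by blast
  have fb0: "f b = 0" if "b \<in> BK" for b using that B(5) span_superset by blast
  have iBC: "independent BC" using independent_mono[OF B(4)] by auto
  have kill: "x = 0" if "x \<in> span BC" "f x = 0" for x
  proof -
    have "x \<in> span BK" using that BCV B(5) by auto
    then show ?thesis using span_disj_zero[OF B(4) B(3)] that(1) by blast
  qed
  have inj: "inj_on f BC"
  proof
    fix c1 c2 assume c: "c1 \<in> BC" "c2 \<in> BC" "f c1 = f c2"
    have "f (c1 - c2) = 0" using lin_on_diff[OF assms(4,1), of c1 c2] c BCV' by auto
    moreover have "c1 - c2 \<in> span BC" using c by (auto intro: span_diff span_base)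
    ultimately have "c1 - c2 = 0" using kill by blast
    then show "c1 = c2" by simp
  qed
  have ind: "independent (f ` BC)"
  proof (rule independent_if_scalars_zero)
    show "finite (f ` BC)" using B(2) by simp
  next
    fix g y assume s: "(\<Sum>x\<in>f ` BC. scale (g x) x) = 0" and y: "y \<in> f ` BC"
    have "(\<Sum>x\<in>f ` BC. scale (g x) x) = (\<Sum>c\<in>BC. scale (g (f c)) (f c))"
      by (simp add: sum.reindex[OF inj])
    also have "\<dots> = f (\<Sum>c\<in>BC. scale (g (f c)) c)"
      using lin_on_sum[OF assms(4,1) B(2) BCV'] by simp
    finally have "f (\<Sum>c\<in>BC. scale (g (f c)) c) = 0" using s by simp
    moreover have "(\<Sum>c\<in>BC. scale (g (f c)) c) \<in> span BC"
      by (auto intro: span_sum span_scale span_base)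
    ultimately have "(\<Sum>c\<in>BC. scale (g (f c)) c) = 0" using kill by blast
    then have "\<forall>c\<in>BC. g (f c) = 0"
      using independentD[OF iBC B(2) subset_refl, of "\<lambda>c. g (f c)"] by blast
    then show "g y = 0" using y by auto
  qed
  have WBC: "W \<subseteq> span (f ` BC)"
  proof
    fix y assume "y \<in> W"
    then obtain x where x: "x \<in> V" "y = f x" using assms(6) by auto
    have "x \<in> range (\<lambda>u. \<Sum>v\<in>BK \<union> BC. scale (u v) v)"
      using span_finite[of "BK \<union> BC"] B(1,2,6) x(1) by (metis finite_UnI)
    then obtain u where u: "x = (\<Sum>v\<in>BK \<union> BC. scale (u v) v)" by blast
    have "BK \<union> BC \<subseteq> V" using B(6) span_superset by blast
    then have "f x = (\<Sum>v\<in>BK \<union> BC. scale (u v) (f v))"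
      using u lin_on_sum[OF assms(4,1), of "BK \<union> BC" u] B(1,2) by simp
    also have "\<dots> = (\<Sum>v\<in>BK. scale (u v) (f v)) + (\<Sum>v\<in>BC. scale (u v) (f v))"
      using sum.union_disjoint[OF B(1,2,3)] by simp
    also have "(\<Sum>v\<in>BK. scale (u v) (f v)) = 0" using fb0 by simp
    finally have "f x = (\<Sum>v\<in>BC. scale (u v) (f v))" by simp
    moreover have "(\<Sum>v\<in>BC. scale (u v) (f v)) \<in> span (f ` BC)"
      by (auto intro: span_sum span_scale span_base)
    ultimately show "y \<in> span (f ` BC)" using x by simp
  qed
  have "f ` BC \<subseteq> W" using assms(6) BCV' by auto
  then have "card (f ` BC) = dim W" using basis_card_eq_dim[OF _ WBC ind] by simp
  then show ?thesis using card_image[OF inj] B(8) by simp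
qed

lemma quotient_exists:
  assumes rep: "is_rep scale UNIV src tgt E \<rho>" and sub: "is_subrep scale UNIV src tgt E \<rho> A"
  shows "\<exists>F \<sigma> f. is_epi scale UNIV src tgt E \<rho> F \<sigma> f \<and> (\<forall>i. \<forall>x\<in>A i. f i x = 0)
     \<and> (\<forall>i. dim (F i) = dim (E i) - dim (A i))"
proof -
  define Pq where "Pq i X Y \<longleftrightarrow> finite X \<and> finite Y \<and> X \<inter> Y = {} \<and> independent (X \<union> Y) \<and>
      span X = A i \<and> span (X \<union> Y) = E i \<and> card Y = dim (E i) - dim (A i)" for i X Y
  have "\<forall>i. \<exists>XY. Pq i (fst XY) (snd XY)"
  proof
    fix i
    obtain B0 where h: "subspace (E i)" "finite B0" "span B0 = E i"
      using rep unfolding is_rep_def fin_dim_sub_def by blast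
    have h2: "subspace (A i)" "A i \<subseteq> E i" using sub unfolding is_subrep_def by auto
    obtain X Y where "finite X" "finite Y" "X \<inter> Y = {}" "independent (X \<union> Y)"
      "span X = A i" "span (X \<union> Y) = E i" "card X = dim (A i)" "card Y = dim (E i) - dim (A i)"
      "dim (A i) \<le> dim (E i)"
      by (rule fds_extend[OF h2 h])
    then have "Pq i X Y" unfolding Pq_def by simp
    then show "\<exists>XY. Pq i (fst XY) (snd XY)" by (intro exI[of _ "(X, Y)"]) simp
  qed
  from choice[OF this] obtain XY where XY0: "\<forall>i. Pq i (fst (XY i)) (snd (XY i))" by blast
  have XY: "Pq i (fst (XY i)) (snd (XY i))" for i using XY0 by blast
  define BA where "BA i = fst (XY i)" for i
  define BC where "BC i = snd (XY i)" for i
  have BB: "\<And>i. finite (BA i)" "\<And>i. finite (BC i)" "\<And>i. BA i \<inter> BC i = {}"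
      "\<And>i. independent (BA i \<union> BC i)"
      "\<And>i. span (BA i) = A i" "\<And>i. span (BA i \<union> BC i) = E i" "\<And>i. card (BC i) = dim (E i) - dim (A i)"
    using XY unfolding Pq_def BA_def BC_def by auto
  define R where "R i x = representation (BA i \<union> BC i) x" for i x
  define p where "p i x = (\<Sum>b\<in>BC i. scale (R i x b) b)" for i x
  define F where "F i = span (BC i)" for i
  define \<sigma> where "\<sigma> a y = p (tgt a) (\<rho> a y)" for a y
  have sE: "subspace (E i)" for i using rep unfolding is_rep_def fin_dim_sub_def by blast
  have sA: "subspace (A i)" "A i \<subseteq> E i" for i using sub unfolding is_subrep_def by auto
  have FE: "F i \<subseteq> E i" for i unfolding F_def using BB(6)[of i] span_mono[of "BC i" "BA i \<union> BC i"] by auto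
  have iBC: "independent (BC i)" for i using independent_mono[OF BB(4)] by auto
  have pa: "p i x \<in> F i" for i x unfolding p_def F_def by (auto intro: span_sum span_scale span_base)
  have pb: "x - p i x \<in> A i" if "x \<in> E i" for i x
  proof -
    have "x = (\<Sum>b\<in>BA i \<union> BC i. scale (R i x b) b)"
      unfolding R_def using sum_representation_eq[OF BB(4), where v=x and B="BA i \<union> BC i"] BB(1,2,6) that by simp
    also have "\<dots> = (\<Sum>b\<in>BA i. scale (R i x b) b) + p i x"
      unfolding p_def using sum.union_disjoint[OF BB(1,2,3)] by simp
    finally have "x - p i x = (\<Sum>b\<in>BA i. scale (R i x b) b)" by (simp add: algebra_simps)
    also have "\<dots> \<in> A i" unfolding BB(5)[symmetric] by (auto intro: span_sum span_scale span_base)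
    finally show ?thesis .
  qed
  have pc: "p i x = 0" if "x \<in> A i" for i x
  proof -
    have xs: "x \<in> span (BA i)" using that BB(5) by simp
    have r: "R i x = representation (BA i) x" unfolding R_def
      by (rule representation_extend[OF BB(4) xs]) blast
    have "R i x b = 0" if "b \<in> BC i" for b
    proof (rule ccontr)
      assume "R i x b \<noteq> 0"
      then have "b \<in> BA i" using r representation_ne_zero[of "BA i" x b] by simp
      then show False using BB(3)[of i] that by blast
    qed
    then show ?thesis unfolding p_def by simp
  qed
  have pe: "p i y = y" if "y \<in> F i" for i y
  proof -
    have ys: "y \<in> span (BC i)" using that F_def by simp
    have r: "R i y = representation (BC i) y" unfolding R_def
      by (rule representation_extend[OF BB(4) ys]) blast
    have "(\<Sum>b\<in>BC i. scale (representation (BC i) y b) b) = y"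
      by (rule sum_representation_eq[OF iBC ys BB(2) subset_refl])
    then show ?thesis unfolding p_def r .
  qed
  have pd: "lin_on scale (E i) (p i)" for i
    unfolding lin_on_def
  proof (intro conjI ballI allI)
    fix x y assume "x \<in> E i" "y \<in> E i"
    then have "R i (x + y) = (\<lambda>b. R i x b + R i y b)"
      unfolding R_def using representation_add[OF BB(4), where u=x and v=y] BB(6) by simp
    then show "p i (x + y) = p i x + p i y"
      unfolding p_def by (simp add: scale_left_distrib sum.distrib)
  next
    fix c x assume "x \<in> E i"
    then have "R i (scale c x) = (\<lambda>b. c * R i x b)"
      unfolding R_def using representation_scale[OF BB(4), where v=x and r=c] BB(6) by simp
    then show "p i (scale c x) = scale c (p i x)"
      unfolding p_def by (simp add: scale_sum_right scale_scale)
  qed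
  have pimg: "p i ` E i = F i" for i
  proof
    show "p i ` E i \<subseteq> F i" using pa by auto
    show "F i \<subseteq> p i ` E i"
    proof
      fix y assume y: "y \<in> F i" show "y \<in> p i ` E i" by (rule image_eqI[where x=y]) (use pe FE y in auto)
    qed
  qed
  have rho: "lin_on scale (E (src a)) (\<rho> a)" "\<rho> a ` E (src a) \<subseteq> E (tgt a)" for a
    using rep unfolding is_rep_def by auto
  have rhoA: "\<rho> a ` A (src a) \<subseteq> A (tgt a)" for a using sub unfolding is_subrep_def by auto
  have epi: "is_epi scale UNIV src tgt E \<rho> F \<sigma> p"
    unfolding is_epi_def is_rep_def
  proof (intro conjI allI ballI)
    fix i show "fin_dim_sub scale (F i)"
      unfolding fin_dim_sub_def F_def using BB(2) span_superset by blast
  next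
    fix a :: 'a
    show "lin_on scale (F (src a)) (\<sigma> a)"
      unfolding lin_on_def \<sigma>_def
    proof (intro conjI ballI allI)
      fix x y assume "x \<in> F (src a)" "y \<in> F (src a)"
      then have xy: "x \<in> E (src a)" "y \<in> E (src a)" using FE by auto
      then have "\<rho> a (x + y) = \<rho> a x + \<rho> a y" using rho(1)[of a] unfolding lin_on_def by blast
      moreover have "\<rho> a x \<in> E (tgt a)" "\<rho> a y \<in> E (tgt a)" using rho(2)[of a] xy by auto
      ultimately show "p (tgt a) (\<rho> a (x + y)) = p (tgt a) (\<rho> a x) + p (tgt a) (\<rho> a y)"
        using pd[of "tgt a"] unfolding lin_on_def by simp
    next
      fix c x assume "x \<in> F (src a)"
      then have xy: "x \<in> E (src a)" using FE by auto
      then have "\<rho> a (scale c x) = scale c (\<rho> a x)" using rho(1)[of a] unfolding lin_on_def by blast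
      moreover have "\<rho> a x \<in> E (tgt a)" using rho(2)[of a] xy by auto
      ultimately show "p (tgt a) (\<rho> a (scale c x)) = scale c (p (tgt a) (\<rho> a x))"
        using pd[of "tgt a"] unfolding lin_on_def by simp
    qed
    show "\<sigma> a ` F (src a) \<subseteq> F (tgt a)" unfolding \<sigma>_def using pa by auto
  next
    fix i show "lin_on scale (E i) (p i)" by (rule pd)
    show "p i ` E i = F i" by (rule pimg)
  next
    fix a :: 'a and x assume x: "x \<in> E (src a)"
    have px: "p (src a) x \<in> E (src a)" using pa FE by auto
    have d: "x - p (src a) x \<in> E (src a)" using x px sE subspace_diff by blast
    have "\<rho> a x = \<rho> a (x - p (src a) x) + \<rho> a (p (src a) x)"
      using rho(1)[of a] d px unfolding lin_on_def by (metis diff_add_cancel)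
    moreover have "\<rho> a (x - p (src a) x) \<in> A (tgt a)" using rhoA[of a] pb[OF x] by auto
    moreover have "\<rho> a (x - p (src a) x) \<in> E (tgt a)" "\<rho> a (p (src a) x) \<in> E (tgt a)"
      using rho(2)[of a] d px by auto
    ultimately have "p (tgt a) (\<rho> a x) = p (tgt a) (\<rho> a (p (src a) x))"
      using pd[of "tgt a"] pc unfolding lin_on_def by simp
    then show "p (tgt a) (\<rho> a x) = \<sigma> a (p (src a) x)" unfolding \<sigma>_def .
  qed
  have dims: "dim (F i) = dim (E i) - dim (A i)" for i
    unfolding F_def using dim_span_eq_card_independent[OF iBC] BB(7) by simp
  show ?thesis by (intro exI[of _ F] exI[of _ \<sigma>] exI[of _ p]) (use epi pc dims in blast)
qed
end



lemma wt_option: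
  "wt (\<eta>' :: 'v::finite option \<Rightarrow> real) n' = \<eta>' None * real (n' None) + (\<Sum>i\<in>UNIV. \<eta>' (Some i) * real (n' (Some i)))"
  unfolding wt_def UNIV_option_conv by (simp add: sum.reindex)

context cvs begin

lemma vs_star: "vector_space (star_sc scale)"
  unfolding vector_space_def star_sc_def
  by (simp add: prod_eq_iff scale_right_distrib scale_left_distrib ring_distribs)

lemma mod_star: "module (star_sc scale)"
  using vs_star module_iff_vector_space by blast

lemma mod_self: "module scale"
  by (simp add: module_iff_vector_space vector_space_axioms)

lemma emb_hom: "module_hom scale (star_sc scale) (\<lambda>x. (x, 0))"
  unfolding module_hom_iff using mod_star mod_self by (simp add: star_sc_def)

lemma dim_star_Some: "vector_space.dim (star_sc scale) (S \<times> {0}) = dim S"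
proof -
  obtain B where B: "B \<subseteq> S" "independent B" "S \<subseteq> span B" "card B = dim S"
    using basis_exists by blast
  let ?e = "\<lambda>x::'b. (x, 0::complex)"
  have inj: "inj ?e" by (auto intro: injI)
  have ind: "\<not> module.dependent (star_sc scale) (?e ` B)"
    using module_hom.independent_injective_image[OF emb_hom B(2)] inj by (auto simp: inj_on_def)
  have sp: "module.span (star_sc scale) (?e ` B) = ?e ` span B"
    by (rule module_hom.span_image[OF emb_hom])
  have s1: "S \<times> {0} \<subseteq> module.span (star_sc scale) (?e ` B)" using sp B(3) by auto
  have s2: "?e ` B \<subseteq> S \<times> {0}" using B(1) by auto
  have "card (?e ` B) = vector_space.dim (star_sc scale) (S \<times> {0})"
    by (rule vector_space.basis_card_eq_dim[OF vs_star s2 s1 ind])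
  moreover have "card (?e ` B) = card B" using inj by (simp add: card_image inj_on_def)
  ultimately show ?thesis using B(4) by simp
qed

lemma dim_star_line: "vector_space.dim (star_sc scale) ({0} \<times> UNIV) = 1"
proof -
  have sp: "module.span (star_sc scale) {(0, 1)} = {0} \<times> UNIV"
    using module.span_singleton[OF mod_star, of "(0,1)"] by (auto simp: star_sc_def)
  have ind: "\<not> module.dependent (star_sc scale) {(0::'b, 1::complex)}"
    using vector_space.dependent_single[OF vs_star, of "(0::'b, 1::complex)"] by (simp add: zero_prod_def)
  have "card {(0::'b, 1::complex)} = vector_space.dim (star_sc scale) ({0} \<times> UNIV)"
    by (rule vector_space.basis_card_eq_dim[OF vs_star _ _ ind]) (use sp in auto)
  then show ?thesis by simp
qed

lemma dim_star_zero: "vector_space.dim (star_sc scale) {0} = 0"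
proof -
  have "card ({} :: ('b \<times> complex) set) = vector_space.dim (star_sc scale) {0}"
    by (rule vector_space.basis_card_eq_dim[OF vs_star])
      (auto simp: module.span_empty[OF mod_star] module.independent_empty[OF mod_star])
  then show ?thesis by simp
qed

lemma star_sub_of:
  assumes sub: "is_subrep scale UNIV src tgt E \<rho> A"
    and Z: "Z = {0} \<or> (Z = {0} \<times> UNIV \<and> (\<forall>i k. k < nat (m i) \<longrightarrow> \<nu> i k \<in> A i))"
  shows "is_subrep (star_sc scale) (star_Ar m) (star_src src) (star_tgt tgt) (star_E E)
           (star_rho scale \<rho> \<nu>) (\<lambda>w. case w of None \<Rightarrow> Z | Some i \<Rightarrow> A i \<times> {0})"
proof -
  have sA: "subspace (A i)" "A i \<subseteq> E i" for i using sub unfolding is_subrep_def by auto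
  have rA: "\<rho> b ` A (src b) \<subseteq> A (tgt b)" for b using sub unfolding is_subrep_def by auto
  have subZ: "module.subspace (star_sc scale) Z"
  proof (cases "Z = {0}")
    case True then show ?thesis using module.subspace_single_0[OF mod_star] by simp
  next
    case False
    then have "Z = {0} \<times> UNIV" using Z by blast
    then show ?thesis unfolding module.subspace_def[OF mod_star] by (auto simp: star_sc_def zero_prod_def)
  qed
  have subS: "module.subspace (star_sc scale) (A i \<times> {0})" for i
    using sA(1)[of i] unfolding module.subspace_def[OF mod_star] by (auto simp: star_sc_def subspace_def zero_prod_def)
  show ?thesis
    unfolding is_subrep_def
  proof (intro conjI allI ballI)
    fix o' :: "'c option"
    show "module.subspace (star_sc scale) (case o' of None \<Rightarrow> Z | Some i \<Rightarrow> A i \<times> {0})"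
      using subZ subS by (cases o') auto
    show "(case o' of None \<Rightarrow> Z | Some i \<Rightarrow> A i \<times> {0}) \<subseteq> star_E E o'"
      using Z sA(2) by (cases o') (auto simp: zero_prod_def)
  next
    fix a :: "'a + 'c \<times> nat" assume a: "a \<in> star_Ar m"
    show "star_rho scale \<rho> \<nu> a ` (case star_src src a of None \<Rightarrow> Z | Some i \<Rightarrow> A i \<times> {0})
          \<subseteq> (case star_tgt tgt a of None \<Rightarrow> Z | Some i \<Rightarrow> A i \<times> {0})"
    proof (cases a)
      case (Inl b)
      then show ?thesis using rA[of b] by auto
    next
      case (Inr ik)
      obtain i k where ik: "ik = (i, k)" by fastforce
      have k: "k < nat (m i)" using a Inr ik unfolding star_Ar_def by auto
      show ?thesis
      proof (cases "Z = {0}")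
        case True
        then show ?thesis using Inr ik subspace_0[OF sA(1)] by (auto simp: zero_prod_def)
      next
        case False
        then have "Z = {0} \<times> UNIV" "\<nu> i k \<in> A i" using Z k by blast+
        then show ?thesis using Inr ik subspace_scale[OF sA(1)] by auto
      qed
    qed
  qed
qed

end


context cvs begin

lemma star_sub_to1:
  assumes sub: "is_subrep (star_sc scale) (star_Ar m) (star_src src) (star_tgt tgt) (star_E E)
           (star_rho scale \<rho> \<nu>) A'"
  shows "\<forall>i. A' (Some i) = fst ` A' (Some i) \<times> {0}"
proof -
  have ss: "module.subspace (star_sc scale) (A' w)" "A' w \<subseteq> star_E E w" for w
    using sub unfolding is_subrep_def by auto
  have ss0: "0 \<in> A' w" "x \<in> A' w \<Longrightarrow> y \<in> A' w \<Longrightarrow> x + y \<in> A' w"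
      "x \<in> A' w \<Longrightarrow> star_sc scale c x \<in> A' w" for w x y c
    using ss(1)[of w] unfolding module.subspace_def[OF mod_star] by auto
  have arr: "star_rho scale \<rho> \<nu> a ` A' (star_src src a) \<subseteq> A' (star_tgt tgt a)" if "a \<in> star_Ar m" for a
    using sub that unfolding is_subrep_def by blast
  have snd0: "snd x = 0" if "x \<in> A' (Some i)" for x i using ss(2)[of "Some i"] that by auto
  show "\<forall>i. A' (Some i) = fst ` A' (Some i) \<times> {0}"
  proof
    fix i
    show "A' (Some i) = fst ` A' (Some i) \<times> {0}"
    proof
      show "A' (Some i) \<subseteq> fst ` A' (Some i) \<times> {0}"
      proof
        fix x assume xa: "x \<in> A' (Some i)"
        have "snd x = 0" using snd0 xa by blast
        moreover have "fst x \<in> fst ` A' (Some i)" using xa by blast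
        ultimately show "x \<in> fst ` A' (Some i) \<times> {0}" by (cases x) auto
      qed
      show "fst ` A' (Some i) \<times> {0} \<subseteq> A' (Some i)"
      proof
        fix x assume "x \<in> fst ` A' (Some i) \<times> {0::complex}"
        then obtain y where y: "y \<in> A' (Some i)" "x = (fst y, 0)" by auto
        then have "snd y = 0" using snd0 by blast
        then have "x = y" using y(2) by (cases y) simp
        then show "x \<in> A' (Some i)" using y(1) by simp
      qed
    qed
  qed
qed

lemma star_sub_to2:
  assumes sub: "is_subrep (star_sc scale) (star_Ar m) (star_src src) (star_tgt tgt) (star_E E)
           (star_rho scale \<rho> \<nu>) A'"
  shows "is_subrep scale UNIV src tgt E \<rho> (\<lambda>i. fst ` A' (Some i))"
proof -
  have ss: "module.subspace (star_sc scale) (A' w)" "A' w \<subseteq> star_E E w" for w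
    using sub unfolding is_subrep_def by auto
  have ss0: "0 \<in> A' w" "x \<in> A' w \<Longrightarrow> y \<in> A' w \<Longrightarrow> x + y \<in> A' w"
      "x \<in> A' w \<Longrightarrow> star_sc scale c x \<in> A' w" for w x y c
    using ss(1)[of w] unfolding module.subspace_def[OF mod_star] by auto
  have arr: "star_rho scale \<rho> \<nu> a ` A' (star_src src a) \<subseteq> A' (star_tgt tgt a)" if "a \<in> star_Ar m" for a
    using sub that unfolding is_subrep_def by blast
  have snd0: "snd x = 0" if "x \<in> A' (Some i)" for x i using ss(2)[of "Some i"] that by auto
  have mem: "(x, 0) \<in> A' (Some i) \<longleftrightarrow> x \<in> fst ` A' (Some i)" for x i
  proof
    assume "(x, 0) \<in> A' (Some i)"
    then show "x \<in> fst ` A' (Some i)" by (rule image_eqI[rotated]) simp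
  next
    assume "x \<in> fst ` A' (Some i)"
    then obtain y where y: "y \<in> A' (Some i)" "x = fst y" by blast
    then have "snd y = 0" using snd0 by blast
    then have "y = (x, 0)" using y(2) by (cases y) simp
    then show "(x, 0) \<in> A' (Some i)" using y(1) by simp
  qed
  show "is_subrep scale UNIV src tgt E \<rho> (\<lambda>i. fst ` A' (Some i))"
    unfolding is_subrep_def
  proof (intro conjI allI ballI)
    fix i
    show "subspace (fst ` A' (Some i))"
      unfolding subspace_def
    proof (intro conjI ballI allI)
      show "0 \<in> fst ` A' (Some i)" using ss0(1)[of "Some i"] mem[of 0 i] by (simp add: zero_prod_def)
    next
      fix x y assume "x \<in> fst ` A' (Some i)" "y \<in> fst ` A' (Some i)"
      then have "(x, 0) + (y, 0) \<in> A' (Some i)" using mem ss0(2) by blast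
      then show "x + y \<in> fst ` A' (Some i)" using mem by simp
    next
      fix c x assume "x \<in> fst ` A' (Some i)"
      then have "star_sc scale c (x, 0) \<in> A' (Some i)" using mem ss0(3) by blast
      then show "scale c x \<in> fst ` A' (Some i)" using mem by (simp add: star_sc_def)
    qed
    show "fst ` A' (Some i) \<subseteq> E i" using ss(2)[of "Some i"] by auto
  next
    fix b assume "b \<in> (UNIV :: 'a set)"
    have "Inl b \<in> star_Ar m" unfolding star_Ar_def by auto
    note ab = arr[OF this]
    show "\<rho> b ` fst ` A' (Some (src b)) \<subseteq> fst ` A' (Some (tgt b))"
    proof
      fix y assume "y \<in> \<rho> b ` fst ` A' (Some (src b))"
      then obtain x where x: "x \<in> fst ` A' (Some (src b))" "y = \<rho> b x" by blast
      then have "(x, 0) \<in> A' (star_src src (Inl b))" using mem by simp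
      then have "star_rho scale \<rho> \<nu> (Inl b) (x, 0) \<in> A' (star_tgt tgt (Inl b))" using ab by blast
      then have "(y, 0) \<in> A' (Some (tgt b))" using x(2) by simp
      then show "y \<in> fst ` A' (Some (tgt b))" using mem by blast
    qed
  qed
qed

lemma star_sub_to3:
  assumes sub: "is_subrep (star_sc scale) (star_Ar m) (star_src src) (star_tgt tgt) (star_E E)
           (star_rho scale \<rho> \<nu>) A'"
  shows "A' None = {0} \<or> (A' None = {0} \<times> UNIV \<and> (\<forall>i k. k < nat (m i) \<longrightarrow> \<nu> i k \<in> fst ` A' (Some i)))"
proof -
  have ss: "module.subspace (star_sc scale) (A' w)" "A' w \<subseteq> star_E E w" for w
    using sub unfolding is_subrep_def by auto
  have ss0: "0 \<in> A' w" "x \<in> A' w \<Longrightarrow> y \<in> A' w \<Longrightarrow> x + y \<in> A' w"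
      "x \<in> A' w \<Longrightarrow> star_sc scale c x \<in> A' w" for w x y c
    using ss(1)[of w] unfolding module.subspace_def[OF mod_star] by auto
  have arr: "star_rho scale \<rho> \<nu> a ` A' (star_src src a) \<subseteq> A' (star_tgt tgt a)" if "a \<in> star_Ar m" for a
    using sub that unfolding is_subrep_def by blast
  have snd0: "snd x = 0" if "x \<in> A' (Some i)" for x i using ss(2)[of "Some i"] that by auto
  have mem: "(x, 0) \<in> A' (Some i) \<longleftrightarrow> x \<in> fst ` A' (Some i)" for x i
  proof
    assume "(x, 0) \<in> A' (Some i)"
    then show "x \<in> fst ` A' (Some i)" by (rule image_eqI[rotated]) simp
  next
    assume "x \<in> fst ` A' (Some i)"
    then obtain y where y: "y \<in> A' (Some i)" "x = fst y" by blast
    then have "snd y = 0" using snd0 by blast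
    then have "y = (x, 0)" using y(2) by (cases y) simp
    then show "(x, 0) \<in> A' (Some i)" using y(1) by simp
  qed
  show "A' None = {0} \<or> (A' None = {0} \<times> UNIV \<and> (\<forall>i k. k < nat (m i) \<longrightarrow> \<nu> i k \<in> fst ` A' (Some i)))"
  proof (cases "A' None \<subseteq> {0}")
    case True
    then show ?thesis using ss0(1)[of None] by blast
  next
    case False
    then obtain z where z: "z \<in> A' None" "z \<noteq> 0" by blast
    then obtain c where zc: "z = (0, c)" using ss(2)[of None] by auto
    have c: "c \<noteq> 0" using z zc by (simp add: zero_prod_def)
    have all: "A' None = {0} \<times> UNIV"
    proof
      show "A' None \<subseteq> {0} \<times> UNIV" using ss(2)[of None] by simp
      show "{0} \<times> UNIV \<subseteq> A' None"
      proof
        fix w assume "w \<in> ({0::'b} \<times> (UNIV :: complex set))"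
        then obtain u where w: "w = (0, u)" by auto
        have "star_sc scale (u / c) z \<in> A' None" using ss0(3) z by blast
        then show "w \<in> A' None" using w zc c by (simp add: star_sc_def)
      qed
    qed
    have "\<nu> i k \<in> fst ` A' (Some i)" if k: "k < nat (m i)" for i k
    proof -
      have "Inr (i, k) \<in> star_Ar m" unfolding star_Ar_def using k by auto
      from arr[OF this] have "star_rho scale \<rho> \<nu> (Inr (i, k)) ` A' None \<subseteq> A' (Some i)" by simp
      moreover have "(0, 1) \<in> A' None" using all by simp
      ultimately have "(scale 1 (\<nu> i k), 0) \<in> A' (Some i)" by force
      then show ?thesis using mem by simp
    qed
    then show ?thesis using all by blast
  qed
qed

lemma wt_star:
  assumes "\<forall>i. A' (Some i) = A i \<times> {0}"
  shows "wt (star_wt \<eta> d) (dimvec (star_sc scale) A') =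
     - wt \<eta> d * real (vector_space.dim (star_sc scale) (A' None)) + wt \<eta> (dimvec scale A)"
  unfolding wt_option dimvec_def using assms dim_star_Some by (simp add: wt_def)

end



definition sz :: "('v::finite \<Rightarrow> nat) \<Rightarrow> real" where
  "sz n = (\<Sum>i\<in>UNIV. real (n i))"

lemma sz_nonneg: "0 \<le> sz n" unfolding sz_def by (simp add: sum_nonneg)

lemma wt_shift: "wt (\<lambda>i. \<theta> i - \<epsilon>) n = wt \<theta> n - \<epsilon> * sz n"
  unfolding wt_def sz_def by (simp add: left_diff_distrib sum_subtractf sum_distrib_left)

lemma wt_diff: "(\<And>i. k i \<le> n i) \<Longrightarrow> wt \<theta> (\<lambda>i. n i - k i) = wt \<theta> n - wt \<theta> k"
  unfolding wt_def by (simp add: of_nat_diff right_diff_distrib sum_subtractf)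

lemma sz_diff: "(\<And>i. k i \<le> n i) \<Longrightarrow> sz (\<lambda>i. n i - k i) = sz n - sz k"
  unfolding sz_def by (simp add: of_nat_diff sum_subtractf)

lemma sz_pos: "n i > 0 \<Longrightarrow> sz n > 0"
proof -
  assume "n i > 0"
  then have "0 < real (n i)" by simp
  also have "real (n i) \<le> sz n" unfolding sz_def
    by (rule member_le_sum) auto
  finally show ?thesis .
qed

context cvs begin

lemma kernel_subspace:
  assumes "subspace V" "lin_on scale V f"
  shows "subspace {x\<in>V. f x = 0}"
  unfolding subspace_def
proof (intro conjI ballI allI)
  show "0 \<in> {x\<in>V. f x = 0}" using lin_on_0[OF assms(2) subspace_0[OF assms(1)]] subspace_0[OF assms(1)] by simp
next
  fix x y assume "x \<in> {x\<in>V. f x = 0}" "y \<in> {x\<in>V. f x = 0}"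
  then show "x + y \<in> {x\<in>V. f x = 0}" using assms unfolding lin_on_def by (auto intro: subspace_add)
next
  fix c x assume "x \<in> {x\<in>V. f x = 0}"
  then show "scale c x \<in> {x\<in>V. f x = 0}" using assms unfolding lin_on_def by (auto intro: subspace_scale)
qed

lemma ss_iff:
  fixes src tgt :: "'a \<Rightarrow> 'v::finite" and m :: "'v \<Rightarrow> int"
  assumes rep: "is_rep scale UNIV src tgt E \<rho>" and dE: "dimvec scale E = d"
  shows "semistable (star_sc scale) (star_Ar m) (star_src src) (star_tgt tgt) (star_E E) (star_rho scale \<rho> \<nu>) (star_wt \<eta> d) \<longleftrightarrow>
    (\<forall>A. is_subrep scale UNIV src tgt E \<rho> A \<longrightarrow> wt \<eta> (dimvec scale A) \<le> 0) \<and>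
    (\<forall>A. is_subrep scale UNIV src tgt E \<rho> A \<and> (\<forall>i k. k < nat (m i) \<longrightarrow> \<nu> i k \<in> A i) \<longrightarrow> wt \<eta> (dimvec scale A) \<le> wt \<eta> d)"
  (is "?L \<longleftrightarrow> ?R1 \<and> ?R2")
proof -
  let ?DS = "vector_space.dim (star_sc scale)"
  have tot: "wt (star_wt \<eta> d) (dimvec (star_sc scale) (star_E E)) = 0"
  proof -
    have "\<forall>i. star_E E (Some i) = E i \<times> {0}" by simp
    from wt_star[OF this]
    have "wt (star_wt \<eta> d) (dimvec (star_sc scale) (star_E E)) = - wt \<eta> d * real (?DS (star_E E None)) + wt \<eta> (dimvec scale E)" .
    then show ?thesis using dim_star_line dE by simp
  qed
  show ?thesis
  proof
    assume L: ?L
    then have L2: "\<And>A'. is_subrep (star_sc scale) (star_Ar m) (star_src src) (star_tgt tgt) (star_E E) (star_rho scale \<rho> \<nu>) A'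
        \<Longrightarrow> wt (star_wt \<eta> d) (dimvec (star_sc scale) A') \<le> 0" unfolding semistable_def by blast
    show "?R1 \<and> ?R2"
    proof (intro conjI allI impI)
      fix A assume A: "is_subrep scale UNIV src tgt E \<rho> A"
      let ?A' = "\<lambda>w. case w of None \<Rightarrow> {0} | Some i \<Rightarrow> A i \<times> {0::complex}"
      have "is_subrep (star_sc scale) (star_Ar m) (star_src src) (star_tgt tgt) (star_E E) (star_rho scale \<rho> \<nu>) ?A'"
        by (rule star_sub_of[OF A]) simp
      then have "wt (star_wt \<eta> d) (dimvec (star_sc scale) ?A') \<le> 0" by (rule L2)
      moreover have "wt (star_wt \<eta> d) (dimvec (star_sc scale) ?A') = - wt \<eta> d * real (?DS (?A' None)) + wt \<eta> (dimvec scale A)"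
        by (rule wt_star) simp
      ultimately show "wt \<eta> (dimvec scale A) \<le> 0" using dim_star_zero by simp
    next
      fix A assume A: "is_subrep scale UNIV src tgt E \<rho> A \<and> (\<forall>i k. k < nat (m i) \<longrightarrow> \<nu> i k \<in> A i)"
      let ?A' = "\<lambda>w. case w of None \<Rightarrow> {0} \<times> UNIV | Some i \<Rightarrow> A i \<times> {0::complex}"
      have "is_subrep (star_sc scale) (star_Ar m) (star_src src) (star_tgt tgt) (star_E E) (star_rho scale \<rho> \<nu>) ?A'"
        by (rule star_sub_of[OF conjunct1[OF A]]) (use A in simp)
      then have "wt (star_wt \<eta> d) (dimvec (star_sc scale) ?A') \<le> 0" by (rule L2)
      moreover have "wt (star_wt \<eta> d) (dimvec (star_sc scale) ?A') = - wt \<eta> d * real (?DS (?A' None)) + wt \<eta> (dimvec scale A)"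
        by (rule wt_star) simp
      ultimately show "wt \<eta> (dimvec scale A) \<le> wt \<eta> d" using dim_star_line by simp
    qed
  next
    assume R: "?R1 \<and> ?R2"
    show ?L unfolding semistable_def
    proof (intro conjI allI impI)
      show "wt (star_wt \<eta> d) (dimvec (star_sc scale) (star_E E)) = 0" by (rule tot)
    next
      fix A' assume A': "is_subrep (star_sc scale) (star_Ar m) (star_src src) (star_tgt tgt) (star_E E) (star_rho scale \<rho> \<nu>) A'"
      have sA: "is_subrep scale UNIV src tgt E \<rho> (\<lambda>i. fst ` A' (Some i))" by (rule star_sub_to2[OF A'])
      have w: "wt (star_wt \<eta> d) (dimvec (star_sc scale) A') = - wt \<eta> d * real (?DS (A' None)) + wt \<eta> (dimvec scale (\<lambda>i. fst ` A' (Some i)))"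
        by (rule wt_star[OF star_sub_to1[OF A']])
      from star_sub_to3[OF A'] show "wt (star_wt \<eta> d) (dimvec (star_sc scale) A') \<le> 0"
      proof
        assume "A' None = {0}"
        then show ?thesis using w dim_star_zero R sA by simp
      next
        assume "A' None = {0} \<times> UNIV \<and> (\<forall>i k. k < nat (m i) \<longrightarrow> \<nu> i k \<in> fst ` A' (Some i))"
        then show ?thesis using w dim_star_line R sA by simp
      qed
    qed
  qed
qed

end



context cvs begin

lemma main_cvs:
  fixes src tgt :: "'a \<Rightarrow> 'v::finite" and m :: "'v \<Rightarrow> int" and d :: "'v \<Rightarrow> nat" and \<theta> :: "'v \<Rightarrow> real"
  assumes rep: "is_rep scale UNIV src tgt E \<rho>" and dE: "dimvec scale E = d"
    and nuE: "\<forall>i k. k < nat (m i) \<longrightarrow> \<nu> i k \<in> E i"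
  shows "(\<exists>\<epsilon>0>0. \<forall>\<epsilon>. 0 < \<epsilon> \<and> \<epsilon> < \<epsilon>0 \<longrightarrow>
            semistable (star_sc scale) (star_Ar m) (star_src src) (star_tgt tgt)
              (star_E E) (star_rho scale \<rho> \<nu>) (star_wt (\<lambda>i. \<theta> i - \<epsilon>) d))
         \<longleftrightarrow> in_Fcat scale src tgt \<theta> E \<rho> \<and> coker_in_Tcat scale src tgt \<theta> m E \<rho> \<nu>"
proof -
  let ?SS = "\<lambda>\<epsilon>. semistable (star_sc scale) (star_Ar m) (star_src src) (star_tgt tgt)
              (star_E E) (star_rho scale \<rho> \<nu>) (star_wt (\<lambda>i. \<theta> i - \<epsilon>) d)"
  have SSiff: "?SS \<epsilon> \<longleftrightarrow>
    (\<forall>A. is_subrep scale UNIV src tgt E \<rho> A \<longrightarrow> wt \<theta> (dimvec scale A) - \<epsilon> * sz (dimvec scale A) \<le> 0) \<and>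
    (\<forall>A. is_subrep scale UNIV src tgt E \<rho> A \<and> (\<forall>i k. k < nat (m i) \<longrightarrow> \<nu> i k \<in> A i) \<longrightarrow>
       wt \<theta> (dimvec scale A) - \<epsilon> * sz (dimvec scale A) \<le> wt \<theta> d - \<epsilon> * sz d)" for \<epsilon>
    using ss_iff[OF rep dE, of m \<nu> "\<lambda>i. \<theta> i - \<epsilon>"] by (simp add: wt_shift)
  have dEi: "dim (E i) = d i" for i using fun_cong[OF dE, of i] unfolding dimvec_def by simp
  have fd: "subspace (E i)" "\<exists>B0. finite B0 \<and> span B0 = E i" for i
    using rep unfolding is_rep_def fin_dim_sub_def by blast+
  have dle: "dimvec scale A i \<le> d i" if "is_subrep scale UNIV src tgt E \<rho> A" for A i
  proof -
    obtain B0 where "finite B0" "span B0 = E i" using fd(2) by blast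
    moreover have "A i \<subseteq> E i" using that unfolding is_subrep_def by blast
    ultimately show ?thesis using dim_mono_fds[OF fd(1)] dE unfolding dimvec_def by blast
  qed
  show ?thesis
  proof
    assume "\<exists>\<epsilon>0>0. \<forall>\<epsilon>. 0 < \<epsilon> \<and> \<epsilon> < \<epsilon>0 \<longrightarrow> ?SS \<epsilon>"
    then obtain \<epsilon>0 where e0: "\<epsilon>0 > 0" and H: "\<And>\<epsilon>. 0 < \<epsilon> \<Longrightarrow> \<epsilon> < \<epsilon>0 \<Longrightarrow> ?SS \<epsilon>" by blast
    have inF: "in_Fcat scale src tgt \<theta> E \<rho>"
      unfolding in_Fcat_def
    proof (intro allI impI)
      fix A assume A: "is_subrep scale UNIV src tgt E \<rho> A"
      let ?w = "wt \<theta> (dimvec scale A)" and ?s = "sz (dimvec scale A)"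
      show "?w \<le> 0"
      proof (rule ccontr)
        assume "\<not> ?w \<le> 0"
        then have wp: "?w > 0" by simp
        have s0: "?s \<ge> 0" by (rule sz_nonneg)
        define \<epsilon> where "\<epsilon> = min (\<epsilon>0 / 2) (?w / (?s + 1))"
        have ep: "\<epsilon> > 0" using e0 wp s0 unfolding \<epsilon>_def by simp
        have el: "\<epsilon> < \<epsilon>0" using e0 unfolding \<epsilon>_def by simp
        have "\<epsilon> \<le> ?w / (?s + 1)" unfolding \<epsilon>_def by simp
        then have "\<epsilon> * (?s + 1) \<le> ?w" using s0 by (simp add: pos_le_divide_eq)
        moreover have "?w - \<epsilon> * ?s \<le> 0" using H[OF ep el] A unfolding SSiff by blast
        ultimately show False using ep by (simp add: algebra_simps)
      qed
    qed
    have inT: "coker_in_Tcat scale src tgt \<theta> m E \<rho> \<nu>"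
      unfolding coker_in_Tcat_def
    proof (intro allI impI)
      fix F \<sigma> f
      assume asm: "is_epi scale UNIV src tgt E \<rho> F \<sigma> f \<and> (\<forall>i k. k < nat (m i) \<longrightarrow> f i (\<nu> i k) = 0) \<and> (\<exists>i. F i \<noteq> {0})"
      have epi: "is_epi scale UNIV src tgt E \<rho> F \<sigma> f" using asm by blast
      have repF: "is_rep scale UNIV src tgt F \<sigma>" using epi unfolding is_epi_def by blast
      have fdF: "subspace (F i)" "\<exists>B0. finite B0 \<and> span B0 = F i" for i
        using repF unfolding is_rep_def fin_dim_sub_def by blast+
      have flin: "lin_on scale (E i) (f i)" "f i ` E i = F i" for i using epi unfolding is_epi_def by blast+
      have fcomm: "f (tgt a) (\<rho> a x) = \<sigma> a (f (src a) x)" if "x \<in> E (src a)" for a x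
        using epi that unfolding is_epi_def by blast
      have slin: "lin_on scale (F (src a)) (\<sigma> a)" for a using repF unfolding is_rep_def by blast
      have rlin: "\<rho> a ` E (src a) \<subseteq> E (tgt a)" for a using rep unfolding is_rep_def by blast
      define K where "K i = {x \<in> E i. f i x = 0}" for i
      have sK: "is_subrep scale UNIV src tgt E \<rho> K"
        unfolding is_subrep_def
      proof (intro conjI allI ballI)
        fix i show "subspace (K i)" unfolding K_def by (rule kernel_subspace[OF fd(1) flin(1)])
        show "K i \<subseteq> E i" unfolding K_def by blast
      next
        fix a :: 'a
        show "\<rho> a ` K (src a) \<subseteq> K (tgt a)"
        proof
          fix y assume "y \<in> \<rho> a ` K (src a)"
          then obtain x where x: "x \<in> E (src a)" "f (src a) x = 0" "y = \<rho> a x" unfolding K_def by blast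
          have "f (tgt a) y = \<sigma> a 0" using fcomm[OF x(1)] x by simp
          also have "\<dots> = 0" by (rule lin_on_0[OF slin subspace_0[OF fdF(1)]])
          finally show "y \<in> K (tgt a)" using rlin x unfolding K_def by blast
        qed
      qed
      have nuK: "\<forall>i k. k < nat (m i) \<longrightarrow> \<nu> i k \<in> K i" using asm nuE unfolding K_def by blast
      have dF: "dimvec scale F = (\<lambda>i. d i - dimvec scale K i)"
      proof
        fix i
        obtain B0 where "finite B0" "span B0 = E i" using fd(2) by blast
        from rank_nullity[OF fd(1) this flin(1) fdF(1) flin(2)]
        show "dimvec scale F i = d i - dimvec scale K i" using dEi unfolding dimvec_def K_def by simp
      qed
      obtain i0 where i0: "F i0 \<noteq> {0}" using asm by blast
      have "dimvec scale F i0 > 0"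
      proof -
        obtain B0 where "finite B0" "span B0 = F i0" using fdF(2) by blast
        then have "dim (F i0) = 0 \<longleftrightarrow> F i0 \<subseteq> {0}" using dim_0_fds by blast
        moreover have "\<not> F i0 \<subseteq> {0}" using i0 subspace_0[OF fdF(1)] by blast
        ultimately show ?thesis unfolding dimvec_def by simp
      qed
      then have szF: "sz (dimvec scale F) > 0" by (rule sz_pos)
      have kd: "\<And>i. dimvec scale K i \<le> d i" using dle[OF sK] .
      have wF: "wt \<theta> (dimvec scale F) = wt \<theta> d - wt \<theta> (dimvec scale K)" unfolding dF by (rule wt_diff[OF kd])
      have sF: "sz (dimvec scale F) = sz d - sz (dimvec scale K)" unfolding dF by (rule sz_diff[OF kd])
      have "wt \<theta> (dimvec scale K) - \<epsilon>0/2 * sz (dimvec scale K) \<le> wt \<theta> d - \<epsilon>0/2 * sz d"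
        using H[of "\<epsilon>0/2"] e0 sK nuK unfolding SSiff by auto
      moreover have "\<epsilon>0/2 * sz d = \<epsilon>0/2 * sz (dimvec scale F) + \<epsilon>0/2 * sz (dimvec scale K)"
        unfolding sF by (simp add: algebra_simps)
      ultimately have "\<epsilon>0/2 * sz (dimvec scale F) \<le> wt \<theta> (dimvec scale F)" using wF by linarith
      moreover have "\<epsilon>0/2 * sz (dimvec scale F) > 0" using e0 szF by simp
      ultimately show "wt \<theta> (dimvec scale F) > 0" by linarith
    qed
    show "in_Fcat scale src tgt \<theta> E \<rho> \<and> coker_in_Tcat scale src tgt \<theta> m E \<rho> \<nu>" using inF inT by blast
  next
    assume "in_Fcat scale src tgt \<theta> E \<rho> \<and> coker_in_Tcat scale src tgt \<theta> m E \<rho> \<nu>"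
    then have inF: "\<And>A. is_subrep scale UNIV src tgt E \<rho> A \<Longrightarrow> wt \<theta> (dimvec scale A) \<le> 0"
      and inT: "coker_in_Tcat scale src tgt \<theta> m E \<rho> \<nu>" unfolding in_Fcat_def by blast+
    define X where "X = {n :: 'v \<Rightarrow> nat. (\<forall>i. n i \<le> d i) \<and> wt \<theta> n < wt \<theta> d}"
    define g where "g n = (wt \<theta> d - wt \<theta> n) / (sz d + 1)" for n
    define \<epsilon>0 where "\<epsilon>0 = Min (insert 1 (g ` X))"
    have finX: "finite X"
    proof -
      have "X \<subseteq> Pi\<^sub>E UNIV (\<lambda>i. {..d i})" unfolding X_def PiE_UNIV_domain by auto
      moreover have "finite (Pi\<^sub>E UNIV (\<lambda>i. {..d i}))" by (rule finite_PiE) auto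
      ultimately show ?thesis by (rule finite_subset)
    qed
    have gpos: "g n > 0" if "n \<in> X" for n
      using that sz_nonneg[of d] unfolding X_def g_def by (simp add: divide_pos_pos)
    have e0: "\<epsilon>0 > 0" unfolding \<epsilon>0_def using finX gpos by (simp add: Min_gr_iff)
    have e0g: "\<epsilon>0 \<le> g n" if "n \<in> X" for n unfolding \<epsilon>0_def using finX that by simp
    show "\<exists>\<epsilon>0>0. \<forall>\<epsilon>. 0 < \<epsilon> \<and> \<epsilon> < \<epsilon>0 \<longrightarrow> ?SS \<epsilon>"
    proof (intro exI[of _ \<epsilon>0] conjI allI impI)
      show "\<epsilon>0 > 0" by (rule e0)
      fix \<epsilon> assume ep: "0 < \<epsilon> \<and> \<epsilon> < \<epsilon>0"
      show "?SS \<epsilon>" unfolding SSiff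
      proof (intro conjI allI impI)
        fix A assume A: "is_subrep scale UNIV src tgt E \<rho> A"
        show "wt \<theta> (dimvec scale A) - \<epsilon> * sz (dimvec scale A) \<le> 0"
        proof -
          have "\<epsilon> * sz (dimvec scale A) \<ge> 0" using sz_nonneg[of "dimvec scale A"] ep by simp
          then show ?thesis using inF[OF A] by linarith
        qed
      next
        fix A assume A: "is_subrep scale UNIV src tgt E \<rho> A \<and> (\<forall>i k. k < nat (m i) \<longrightarrow> \<nu> i k \<in> A i)"
        have sA: "is_subrep scale UNIV src tgt E \<rho> A" using A by blast
        show "wt \<theta> (dimvec scale A) - \<epsilon> * sz (dimvec scale A) \<le> wt \<theta> d - \<epsilon> * sz d"
        proof (cases "dimvec scale A = d")
          case True then show ?thesis by simp
        next
          case False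
          then obtain i0 where i0: "dimvec scale A i0 \<noteq> d i0" by auto
          have ad: "\<And>i. dimvec scale A i \<le> d i" using dle[OF sA] .
          obtain F \<sigma> f where Q: "is_epi scale UNIV src tgt E \<rho> F \<sigma> f" "\<forall>i. \<forall>x\<in>A i. f i x = 0"
            "\<forall>i. dim (F i) = dim (E i) - dim (A i)"
            using quotient_exists[OF rep sA] by blast
          have dF: "dimvec scale F = (\<lambda>i. d i - dimvec scale A i)"
            using Q(3) dE unfolding dimvec_def by auto
          have "F i0 \<noteq> {0}"
          proof
            assume "F i0 = {0}"
            then have "dim (F i0) = 0" using dim_0_fds[of "{}" "F i0"] by simp
            then show False using dF i0 ad[of i0] unfolding dimvec_def by (metis diff_is_0_eq le_antisym)
          qed
          moreover have "\<forall>i k. k < nat (m i) \<longrightarrow> f i (\<nu> i k) = 0" using A Q(2) by blast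
          ultimately have "wt \<theta> (dimvec scale F) > 0" using inT Q(1) unfolding coker_in_Tcat_def by blast
          then have wp: "wt \<theta> (dimvec scale A) < wt \<theta> d" unfolding dF wt_diff[OF ad] by simp
          then have "dimvec scale A \<in> X" unfolding X_def using ad by blast
          then have "\<epsilon> < g (dimvec scale A)" using e0g ep by fastforce
          then have "\<epsilon> * (sz d + 1) < wt \<theta> d - wt \<theta> (dimvec scale A)"
            unfolding g_def using sz_nonneg[of d] by (simp add: pos_less_divide_eq)
          moreover have "\<epsilon> * sz (dimvec scale A) \<ge> 0" using ep sz_nonneg[of "dimvec scale A"] by simp
          ultimately show ?thesis using ep by (simp add: algebra_simps)
        qed
      qed
    qed
  qed
qed

end

theorem mainTheorem12:
  fixes src tgt :: "'a \<Rightarrow> 'v::finite"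
    and I :: "(('v \<times> 'a list) \<Rightarrow> complex) set"
    and m :: "'v \<Rightarrow> int" and d :: "'v \<Rightarrow> nat" and \<theta> :: "'v \<Rightarrow> real"
    and sc :: "complex \<Rightarrow> 'e::ab_group_add \<Rightarrow> 'e"
    and E :: "'v \<Rightarrow> 'e set" and \<rho> :: "'a \<Rightarrow> 'e \<Rightarrow> 'e" and \<nu> :: "'v \<Rightarrow> nat \<Rightarrow> 'e"
  assumes "admissible_ideal src tgt I"
    and "M_plus m"
    and "vector_space sc"
    and "is_rep sc UNIV src tgt E \<rho>"
    and "\<forall>r\<in>I. annihilates sc tgt E \<rho> r"
    and "dimvec sc E = d"
    and "\<forall>i k. k < nat (m i) \<longrightarrow> \<nu> i k \<in> E i"
  shows "(\<exists>\<epsilon>0>0. \<forall>\<epsilon>. 0 < \<epsilon> \<and> \<epsilon> < \<epsilon>0 \<longrightarrow>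
            semistable (star_sc sc) (star_Ar m) (star_src src) (star_tgt tgt)
              (star_E E) (star_rho sc \<rho> \<nu>) (star_wt (\<lambda>i. \<theta> i - \<epsilon>) d))
         \<longleftrightarrow> in_Fcat sc src tgt \<theta> E \<rho> \<and> coker_in_Tcat sc src tgt \<theta> m E \<rho> \<nu>"
proof -
  interpret V: cvs sc using assms(3) by (simp add: cvs_def)
  show ?thesis by (rule V.main_cvs[OF assms(4) assms(6) assms(7)])
qed

end
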